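(* Let $(\alpha_n)_{n\ge1}$ be a sequence with $0<\alpha_n<1$ for all $n$ and $\sum_n\alpha_n<\infty$, and let $E\sim(\alpha_n)$ be the associated Cantor set. Then $E$ is a nowhere dense closed set which has strong uniform density type (SUDT).
   Context: Construction of $E\sim(\alpha_n)$: start with $\mathcal{I}_0=\{[0,1]\}$. Given the collection $\mathcal{I}_{n-1}$ of $2^{n-1}$ disjoint closed intervals of equal length, obtain $\mathcal{I}_n$ by removing from each $I\in\mathcal{I}_{n-1}$ the open interval centered at the midpoint of $I$ of length $\alpha_n|I|$, leaving $2^n$ closed intervals each of length $d_n$, where $d_0=1$ and $2d_n=(1-\alpha_n)d_{n-1}$. Let $E_n=\bigcup_{I\in\mathcal{I}_n}I$ and $E=\bigcap_{n}E_n$. $|A|$ denotes Lebesgue measure. For measurable $E$ and $\gamma,\delta>0$, $E^{\gamma,\delta}=\{x\in\mathbb{R} : \forall r\in(0,\delta],\ \max\{|(x-r,x)\cap E|/r,\ |(x,x+r)\cap E|/r\}\ge\gamma\}$. $E$ has SUDT if there exist sequences $\gamma_n\nearrow1$ and $\delta_n\searrow0$ such that $E\subseteq\bigcup_{k=1}^\infty\bigcap_{n=k}^\infty E^{\gamma_n,\delta_n}$. *)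

theory Defs
  imports "HOL-Analysis.Analysis"
begin

text \<open>Intervals are represented by their endpoint pairs \<open>(a,b)\<close>,
  standing for the closed interval \<open>{a..b}\<close>. The sequence \<open>\<alpha>\<close> is indexed from 1:
  step \<open>n \<ge> 1\<close> uses \<open>\<alpha> n\<close>.\<close>

fun cantor_intervals :: "(nat \<Rightarrow> real) \<Rightarrow> nat \<Rightarrow> (real \<times> real) set" where
  "cantor_intervals \<alpha> 0 = {(0, 1)}"
| "cantor_intervals \<alpha> (Suc n) =
     (\<Union>(a, b) \<in> cantor_intervals \<alpha> n.
        (let l = (1 - \<alpha> (Suc n)) * (b - a) / 2 in {(a, a + l), (b - l, b)}))"

definition cantor_level :: "(nat \<Rightarrow> real) \<Rightarrow> nat \<Rightarrow> real set" where
  "cantor_level \<alpha> n = (\<Union>(a, b) \<in> cantor_intervals \<alpha> n. {a..b})"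

definition cantor_set :: "(nat \<Rightarrow> real) \<Rightarrow> real set" where
  "cantor_set \<alpha> = (\<Inter>n. cantor_level \<alpha> n)"

definition density_set :: "real set \<Rightarrow> real \<Rightarrow> real \<Rightarrow> real set" where
  "density_set E \<gamma> \<delta> = {x. \<forall>r \<in> {0<..\<delta>}.
      max (measure lebesgue ({x - r<..<x} \<inter> E) / r)
          (measure lebesgue ({x<..<x + r} \<inter> E) / r) \<ge> \<gamma>}"

definition SUDT :: "real set \<Rightarrow> bool" where
  "SUDT E \<longleftrightarrow> (\<exists>\<gamma> \<delta> :: nat \<Rightarrow> real.
      incseq \<gamma> \<and> \<gamma> \<longlonglongrightarrow> 1 \<and> decseq \<delta> \<and> \<delta> \<longlonglongrightarrow> 0 \<and> (\<forall>n. \<gamma> n > 0 \<and> \<delta> n > 0) \<and>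
      E \<subseteq> (\<Union>k. \<Inter>n \<in> {k..}. density_set E (\<gamma> n) (\<delta> n)))"

end

theory Submission
  imports Defs
begin

definition cl :: "(nat \<Rightarrow> real) \<Rightarrow> nat \<Rightarrow> real" where
  "cl \<alpha> n = (\<Prod>j\<in>{1..n}. (1 - \<alpha> j) / 2)"

lemma cl_0[simp]: "cl \<alpha> 0 = 1" by (simp add: cl_def)
lemma cl_Suc: "cl \<alpha> (Suc n) = (1 - \<alpha> (Suc n)) * cl \<alpha> n / 2"
  by (simp add: cl_def prod.nat_ivl_Suc')

lemma ci_Suc_iff:
  "p \<in> cantor_intervals \<alpha> (Suc n) \<longleftrightarrow> (\<exists>a b. (a,b) \<in> cantor_intervals \<alpha> n \<and>
     (p = (a, a + (1 - \<alpha> (Suc n)) * (b - a) / 2) \<or> p = (b - (1 - \<alpha> (Suc n)) * (b - a) / 2, b)))"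
  by (auto simp: Let_def)

lemma ci_finite: "finite (cantor_intervals \<alpha> n)"
  by (induction n) (auto simp: Let_def split_beta)

lemma level_iff: "x \<in> cantor_level \<alpha> n \<longleftrightarrow> (\<exists>a b. (a,b) \<in> cantor_intervals \<alpha> n \<and> a \<le> x \<and> x \<le> b)"
  unfolding cantor_level_def by force

locale cset =
  fixes \<alpha> :: "nat \<Rightarrow> real"
  assumes apos: "\<And>n. n \<ge> 1 \<Longrightarrow> 0 < \<alpha> n \<and> \<alpha> n < 1"
begin

lemma a_pos: "0 < \<alpha> (Suc n)" and a_lt1: "\<alpha> (Suc n) < 1"
  using apos[of "Suc n"] by auto

lemma cl_pos: "cl \<alpha> n > 0"
proof (induction n)
  case (Suc n)
  then show ?case using a_lt1[of n] by (simp add: cl_Suc)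
qed simp

lemma cl_Suc_less: "cl \<alpha> (Suc n) < cl \<alpha> n / 2"
proof -
  have "0 < \<alpha> (Suc n)" by (rule a_pos)
  then show ?thesis using cl_pos[of n] by (simp add: cl_Suc mult_less_cancel_right1 field_simps)
qed

lemma cl_le: "cl \<alpha> n \<le> (1/2)^n"
proof (induction n)
  case (Suc n)
  then show ?case using cl_Suc_less[of n] by simp
qed simp

lemma cl_lim: "cl \<alpha> \<longlonglongrightarrow> 0"
proof (rule tendsto_sandwich[where f="\<lambda>_. 0" and h="\<lambda>n. (1/2)^n"])
  show "\<forall>\<^sub>F n in sequentially. 0 \<le> cl \<alpha> n" using cl_pos by (simp add: less_imp_le)
  show "\<forall>\<^sub>F n in sequentially. cl \<alpha> n \<le> (1/2)^n" using cl_le by simp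
qed (auto intro: LIMSEQ_realpow_zero)

lemma cl_dec: "decseq (cl \<alpha>)"
  proof (rule decseq_SucI)
  fix n show "cl \<alpha> (Suc n) \<le> cl \<alpha> n" using cl_Suc_less[of n] cl_pos[of n] by linarith
qed

lemma ci_geom: "(a,b) \<in> cantor_intervals \<alpha> n \<Longrightarrow> b - a = cl \<alpha> n \<and> 0 \<le> a \<and> b \<le> 1"
proof (induction n arbitrary: a b)
  case 0
  then show ?case by simp
next
  case (Suc n)
  obtain a' b' where ab': "(a',b') \<in> cantor_intervals \<alpha> n"
    "(a,b) = (a', a' + (1 - \<alpha> (Suc n)) * (b' - a') / 2) \<or> (a,b) = (b' - (1 - \<alpha> (Suc n)) * (b' - a') / 2, b')"
    using Suc.prems ci_Suc_iff by blast
  have IH: "b' - a' = cl \<alpha> n" "0 \<le> a'" "b' \<le> 1" using Suc.IH[OF ab'(1)] by auto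
  have al: "0 < \<alpha> (Suc n)" "\<alpha> (Suc n) < 1" using a_pos a_lt1 by auto
  have L: "0 \<le> (1 - \<alpha> (Suc n)) * (b' - a') / 2" "(1 - \<alpha> (Suc n)) * (b' - a') / 2 \<le> b' - a'"
    using al IH cl_pos[of n] by (auto simp: field_simps mult_le_cancel_right1)
  from ab'(2) show ?case
  proof
    assume "(a,b) = (a', a' + (1 - \<alpha> (Suc n)) * (b' - a') / 2)"
    then have "a = a'" "b = a' + (1 - \<alpha> (Suc n)) * (b' - a') / 2" by auto
    then show ?thesis using IH \<open>(1 - \<alpha> (Suc n)) * (b' - a') / 2 \<le> b' - a'\<close> \<open>0 \<le> (1 - \<alpha> (Suc n)) * (b' - a') / 2\<close>
      by (simp add: cl_Suc)
  next
    assume "(a,b) = (b' - (1 - \<alpha> (Suc n)) * (b' - a') / 2, b')"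
    then have "b = b'" "a = b' - (1 - \<alpha> (Suc n)) * (b' - a') / 2" by auto
    then show ?thesis using IH \<open>(1 - \<alpha> (Suc n)) * (b' - a') / 2 \<le> b' - a'\<close> \<open>0 \<le> (1 - \<alpha> (Suc n)) * (b' - a') / 2\<close>
      by (simp add: cl_Suc)
  qed
qed


abbreviation "hl n a b \<equiv> (1 - \<alpha> (Suc n)) * (b - a) / 2"

lemma child_L: "(a,b) \<in> cantor_intervals \<alpha> n \<Longrightarrow> (a, a + hl n a b) \<in> cantor_intervals \<alpha> (Suc n)"
  using ci_Suc_iff by blast
lemma child_R: "(a,b) \<in> cantor_intervals \<alpha> n \<Longrightarrow> (b - hl n a b, b) \<in> cantor_intervals \<alpha> (Suc n)"
  using ci_Suc_iff by blast

lemma hl_bounds: "(a,b) \<in> cantor_intervals \<alpha> n \<Longrightarrow> 0 < hl n a b \<and> 2 * hl n a b < b - a"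
proof -
  assume "(a,b) \<in> cantor_intervals \<alpha> n"
  then have "b - a = cl \<alpha> n" using ci_geom by blast
  then have "b - a > 0" using cl_pos by simp
  moreover have "0 < (b-a) * \<alpha> (Suc n)" "0 < (b-a) * (1 - \<alpha> (Suc n))"
    using a_pos[of n] a_lt1[of n] \<open>b - a > 0\<close> by auto
  moreover have "2 * hl n a b = (b-a) - (b-a) * \<alpha> (Suc n)" "hl n a b = (b-a) * (1 - \<alpha> (Suc n)) / 2"
    by (simp_all add: field_simps)
  ultimately show ?thesis by linarith
qed

lemma ci_order: "p \<in> cantor_intervals \<alpha> n \<Longrightarrow> q \<in> cantor_intervals \<alpha> n \<Longrightarrow> fst p < fst q \<Longrightarrow> snd p < fst q"
proof (induction n arbitrary: p q)
  case 0
  then show ?case by simp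
next
  case (Suc n)
  obtain a b where ab: "(a,b) \<in> cantor_intervals \<alpha> n" "p = (a, a + hl n a b) \<or> p = (b - hl n a b, b)"
    using Suc.prems(1) ci_Suc_iff by blast
  obtain a' b' where ab': "(a',b') \<in> cantor_intervals \<alpha> n" "q = (a', a' + hl n a' b') \<or> q = (b' - hl n a' b', b')"
    using Suc.prems(2) ci_Suc_iff by blast
  have g: "b - a = cl \<alpha> n" "b' - a' = cl \<alpha> n" using ci_geom ab(1) ab'(1) by blast+
  have h: "0 < hl n a b" "2 * hl n a b < b - a" using hl_bounds[OF ab(1)] by auto
  have h': "0 < hl n a' b'" "2 * hl n a' b' < b' - a'" using hl_bounds[OF ab'(1)] by auto
  have pin: "a \<le> fst p" "snd p \<le> b" "fst p \<le> snd p" using ab(2) h by auto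
  have qin: "a' \<le> fst q" "snd q \<le> b'" "fst q \<le> snd q" using ab'(2) h' by auto
  consider "a < a'" | "a' < a" | "a = a'" by linarith
  then show ?case
  proof cases
    case 1
    then have "b < a'" using Suc.IH[OF ab(1) ab'(1)] by simp
    then show ?thesis using pin qin by linarith
  next
    case 2
    then have "b' < a" using Suc.IH[OF ab'(1) ab(1)] by simp
    then show ?thesis using pin qin Suc.prems(3) by linarith
  next
    case 3
    then have "b = b'" using g by linarith
    then show ?thesis using 3 ab(2) ab'(2) h Suc.prems(3) by auto
  qed
qed

lemma level_closed: "closed (cantor_level \<alpha> n)"
  unfolding cantor_level_def split_beta
  by (rule closed_UN) (auto simp: ci_finite)

lemma E_closed: "closed (cantor_set \<alpha>)"
  unfolding cantor_set_def using level_closed by (intro closed_INT) auto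

lemma level_Suc_sub: "cantor_level \<alpha> (Suc n) \<subseteq> cantor_level \<alpha> n"
proof
  fix x assume "x \<in> cantor_level \<alpha> (Suc n)"
  then obtain c e where ce: "(c,e) \<in> cantor_intervals \<alpha> (Suc n)" "c \<le> x" "x \<le> e" using level_iff by blast
  obtain a b where ab: "(a,b) \<in> cantor_intervals \<alpha> n" "(c,e) = (a, a + hl n a b) \<or> (c,e) = (b - hl n a b, b)"
    using ce(1) ci_Suc_iff by blast
  have h: "0 < hl n a b" "2 * hl n a b < b - a" using hl_bounds[OF ab(1)] by auto
  have "a \<le> x \<and> x \<le> b" using ab(2) h ce by auto
  then show "x \<in> cantor_level \<alpha> n" using ab(1) level_iff by blast
qed

lemma level_mono: "m \<le> n \<Longrightarrow> cantor_level \<alpha> n \<subseteq> cantor_level \<alpha> m"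
  by (induction n rule: dec_induct) (use level_Suc_sub in auto)

lemma E_sub_level: "cantor_set \<alpha> \<subseteq> cantor_level \<alpha> n"
  unfolding cantor_set_def by auto


lemma mid_notin: "(a,b) \<in> cantor_intervals \<alpha> n \<Longrightarrow> (a+b)/2 \<notin> cantor_level \<alpha> (Suc n)"
proof
  assume ab: "(a,b) \<in> cantor_intervals \<alpha> n" and m: "(a+b)/2 \<in> cantor_level \<alpha> (Suc n)"
  then obtain c e where ce: "(c,e) \<in> cantor_intervals \<alpha> (Suc n)" "c \<le> (a+b)/2" "(a+b)/2 \<le> e" using level_iff by blast
  obtain a' b' where ab': "(a',b') \<in> cantor_intervals \<alpha> n" "(c,e) = (a', a' + hl n a' b') \<or> (c,e) = (b' - hl n a' b', b')"
    using ce(1) ci_Suc_iff by blast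
  have g: "b - a = cl \<alpha> n" "b' - a' = cl \<alpha> n" using ci_geom ab ab'(1) by blast+
  have h': "0 < hl n a' b'" "2 * hl n a' b' < b' - a'" using hl_bounds[OF ab'(1)] by auto
  have ce2: "a' \<le> c" "e \<le> b'" using ab'(2) h' by auto
  consider "a < a'" | "a' < a" | "a = a'" by linarith
  then show False
  proof cases
    case 1
    then have "b < a'" using ci_order[OF ab ab'(1)] by simp
    then show ?thesis using ce ce2 g cl_pos[of n] by argo
  next
    case 2
    then have "b' < a" using ci_order[OF ab'(1) ab] by simp
    then show ?thesis using ce ce2 g cl_pos[of n] by argo
  next
    case 3
    then have "b = b'" using g by linarith
    then show ?thesis using 3 ab'(2) h' ce by auto
  qed
qed

lemma interior_E: "interior (closure (cantor_set \<alpha>)) = {}"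
proof -
  have "interior (cantor_set \<alpha>) = {}"
  proof (rule ccontr)
    assume "interior (cantor_set \<alpha>) \<noteq> {}"
    then obtain x where "x \<in> interior (cantor_set \<alpha>)" by blast
    then obtain e where e: "e > 0" "ball x e \<subseteq> cantor_set \<alpha>" using mem_interior by blast
    obtain n where n: "cl \<alpha> n < e" using cl_lim e(1) order_tendstoD(2)[OF cl_lim e(1)]
      by (metis eventually_sequentially order.refl)
    have "x \<in> cantor_level \<alpha> n" using e E_sub_level by (metis centre_in_ball subsetD)
    then obtain a b where ab: "(a,b) \<in> cantor_intervals \<alpha> n" "a \<le> x" "x \<le> b" using level_iff by blast
    have "b - a = cl \<alpha> n" using ci_geom ab(1) by blast
    then have "\<bar>x - (a+b)/2\<bar> < e" using ab n unfolding abs_less_iff by argo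
    then have "(a+b)/2 \<in> ball x e" by (simp add: dist_real_def)
    then have "(a+b)/2 \<in> cantor_level \<alpha> (Suc n)" using e E_sub_level by blast
    then show False using mid_notin[OF ab(1)] by blast
  qed
  then show ?thesis using E_closed by (simp add: closure_closed)
qed

end

lemma meas_Ioo: "u \<le> v \<Longrightarrow> measure lebesgue {u<..<(v::real)} = v - u"
  by (subst measure_completion) auto
lemma meas_Icc: "u \<le> v \<Longrightarrow> measure lebesgue {u..(v::real)} = v - u"
  by (subst measure_completion) auto

locale cset2 = cset +
  assumes summ: "summable (\<lambda>n. \<alpha> (Suc n))"
begin

definition T :: "nat \<Rightarrow> real" where "T k = (\<Sum>i. \<alpha> (i + Suc k))"

lemma summ_k: "summable (\<lambda>i. \<alpha> (i + Suc k))"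
proof -
  have "summable (\<lambda>i. \<alpha> (Suc (i + k)))" using summ summable_iff_shift[of "\<lambda>n. \<alpha> (Suc n)" k] by simp
  then show ?thesis by simp
qed

lemma partial_le_T: "(\<Sum>i<m. \<alpha> (i + Suc k)) \<le> T k"
  unfolding T_def by (rule sum_le_suminf[OF summ_k]) (auto simp: less_imp_le[OF a_pos[simplified]])

lemma a_nn: "0 \<le> \<alpha> (i + Suc k)"
  using a_pos[of "i + k"] by simp

lemma T_nonneg: "0 \<le> T k"
  unfolding T_def by (rule suminf_nonneg[OF summ_k a_nn])

lemma T_Suc: "T k = \<alpha> (Suc k) + T (Suc k)"
proof -
  have "T (Suc k) = (\<Sum>i. \<alpha> (Suc i + Suc k))" unfolding T_def by simp
  also have "\<dots> = T k - \<alpha> (Suc k)" unfolding T_def using suminf_split_head[OF summ_k[of k]] by simp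
  finally show ?thesis by simp
qed

lemma T_dec: "decseq T"
  by (rule decseq_SucI) (use T_Suc a_pos in \<open>smt (verit)\<close>)

lemma T_lim: "T \<longlonglongrightarrow> 0"
proof -
  have "(\<lambda>n. (\<Sum>k. \<alpha> (Suc (k + n)))) \<longlonglongrightarrow> 0" using suminf_exist_split2[OF summ] by simp
  moreover have "(\<lambda>n. (\<Sum>k. \<alpha> (Suc (k + n)))) = T" unfolding T_def by (simp add: fun_eq_iff)
  ultimately show ?thesis by simp
qed

lemma level_Icc_lm: "cantor_level \<alpha> n \<inter> {a..b} \<in> lmeasurable"
  by (rule lmeasurable_compact) (simp add: closed_Int_compact level_closed)

lemma E_lm: "cantor_set \<alpha> \<in> lmeasurable"
proof (rule lmeasurable_compact)
  have "cantor_set \<alpha> \<subseteq> {0..1}" using E_sub_level[of 0] by (simp add: cantor_level_def)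
  then show "compact (cantor_set \<alpha>)" using E_closed
    by (meson bounded_closed_interval bounded_subset compact_eq_bounded_closed)
qed

lemma IL: "(a,b) \<in> cantor_intervals \<alpha> k \<Longrightarrow>
   measure lebesgue (cantor_level \<alpha> (k+m) \<inter> {a..b}) \<ge> (1 - (\<Sum>i<m. \<alpha> (i + Suc k))) * (b - a)"
proof (induction m arbitrary: k a b)
  case 0
  have "{a..b} \<subseteq> cantor_level \<alpha> k"
  proof
    fix x assume x: "x \<in> {a..b}"
    show "x \<in> cantor_level \<alpha> k" unfolding level_iff using 0 x by auto
  qed
  then have "cantor_level \<alpha> (k+0) \<inter> {a..b} = {a..b}" by auto
  moreover have "a \<le> b" using ci_geom[OF 0] cl_pos[of k] by linarith
  ultimately show ?case by (simp add: meas_Icc)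
next
  case (Suc m)
  define l where "l = hl k a b"
  define S' where "S' = (\<Sum>i<m. \<alpha> (i + Suc (Suc k)))"
  have h: "0 < l" "2 * l < b - a" using hl_bounds[OF Suc.prems] l_def by auto
  have g: "b - a = cl \<alpha> k" using ci_geom[OF Suc.prems] by blast
  have l2: "2 * l = (1 - \<alpha> (Suc k)) * (b - a)" unfolding l_def by simp
  define L where "L = cantor_level \<alpha> (Suc k + m) \<inter> {a..a+l}"
  define R where "R = cantor_level \<alpha> (Suc k + m) \<inter> {b-l..b}"
  have mL: "measure lebesgue L \<ge> (1 - S') * l"
    using Suc.IH[OF child_L[OF Suc.prems]] unfolding L_def S'_def l_def by simp
  have mR: "measure lebesgue R \<ge> (1 - S') * l"
    using Suc.IH[OF child_R[OF Suc.prems]] unfolding R_def S'_def l_def by simp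
  have disj: "L \<inter> R = {}" unfolding L_def R_def using h by auto
  have sub: "L \<union> R \<subseteq> cantor_level \<alpha> (k + Suc m) \<inter> {a..b}" unfolding L_def R_def using h by auto
  have eq: "measure lebesgue (L \<union> R) = measure lebesgue L + measure lebesgue R"
    using measure_Un3[of L lebesgue R] disj level_Icc_lm unfolding L_def R_def by simp
  have le: "measure lebesgue (L \<union> R) \<le> measure lebesgue (cantor_level \<alpha> (k + Suc m) \<inter> {a..b})"
    by (rule measure_mono_fmeasurable[OF sub]) (use level_Icc_lm in \<open>auto simp: L_def R_def intro!: sets.Un fmeasurableD\<close>)
  have A: "measure lebesgue L + measure lebesgue R \<le> measure lebesgue (cantor_level \<alpha> (k + Suc m) \<inter> {a..b})"
    using eq le by linarith
  have sumeq: "(\<Sum>i<Suc m. \<alpha> (i + Suc k)) = \<alpha> (Suc k) + S'"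
    unfolding S'_def by (subst sum.lessThan_Suc_shift) simp
  have S'nn: "0 \<le> S'" unfolding S'_def by (rule sum_nonneg) (rule a_nn)
  have "(1 - (\<alpha> (Suc k) + S')) * (b - a) \<le> (1 - S') * ((1 - \<alpha> (Suc k)) * (b - a))"
  proof -
    have "(1 - (\<alpha> (Suc k) + S')) \<le> (1 - S') * (1 - \<alpha> (Suc k))"
      using S'nn a_pos[of k] by (simp add: algebra_simps)
    then show ?thesis using h by (metis mult.assoc mult_right_mono less_imp_le diff_gt_0_iff_gt mult_pos_pos zero_less_numeral less_trans)
  qed
  also have "\<dots> = (1 - S') * (2 * l)" by (simp only: l2)
  also have "\<dots> = (1 - S') * l + (1 - S') * l" by (simp add: algebra_simps)
  finally have F: "(1 - (\<alpha> (Suc k) + S')) * (b - a) \<le> (1 - S') * l + (1 - S') * l" .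
  show ?case unfolding sumeq using F A mL mR by linarith
qed


lemma FL: assumes ab: "(a,b) \<in> cantor_intervals \<alpha> k"
  shows "measure lebesgue (cantor_set \<alpha> \<inter> {a..b}) \<ge> (1 - T k) * (b - a)"
proof -
  define A where "A n = cantor_level \<alpha> n \<inter> {a..b}" for n
  have dec: "decseq A" unfolding decseq_def A_def using level_mono by blast
  have rng: "range A \<subseteq> sets lebesgue" unfolding A_def using level_Icc_lm by (auto intro: fmeasurableD)
  have fin: "emeasure lebesgue (A i) \<noteq> \<infinity>" for i
    unfolding A_def using level_Icc_lm[of i a b] by (auto simp: fmeasurable_def)
  have int: "(\<Inter>i. A i) = cantor_set \<alpha> \<inter> {a..b}" unfolding A_def cantor_set_def by auto
  have lim: "(\<lambda>n. measure lebesgue (A n)) \<longlonglongrightarrow> measure lebesgue (cantor_set \<alpha> \<inter> {a..b})"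
    using Lim_measure_decseq[OF rng dec fin] int by simp
  have ba: "0 \<le> b - a" using ci_geom[OF ab] cl_pos[of k] by linarith
  show ?thesis
  proof (rule LIMSEQ_le_const[OF lim], intro exI allI impI)
    fix n assume "k \<le> n"
    then have "n = k + (n - k)" by simp
    then have "measure lebesgue (A n) \<ge> (1 - (\<Sum>i<n-k. \<alpha> (i + Suc k))) * (b - a)"
      unfolding A_def using IL[OF ab, of "n-k"] by metis
    moreover have "(1 - T k) * (b - a) \<le> (1 - (\<Sum>i<n-k. \<alpha> (i + Suc k))) * (b - a)"
      by (rule mult_right_mono[OF _ ba]) (use partial_le_T in simp)
    ultimately show "(1 - T k) * (b - a) \<le> measure lebesgue (A n)" by linarith
  qed
qed

lemma KL: assumes ab: "(a,b) \<in> cantor_intervals \<alpha> k" and uv: "a \<le> u" "u \<le> v" "v \<le> b"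
  shows "measure lebesgue ({u<..<v} \<inter> cantor_set \<alpha>) \<ge> (v - u) - T k * (b - a)"
proof -
  define E where "E = cantor_set \<alpha>"
  have Elm: "E \<in> sets lebesgue" unfolding E_def using E_lm by (auto intro: fmeasurableD)
  have Slm: "{u<..<v} \<in> lmeasurable" by (metis box_real(1) lmeasurable_box)
  have Ilm: "{a..b} \<in> lmeasurable" by (metis cbox_interval lmeasurable_cbox)
  have d1: "measure lebesgue ({u<..<v} - ({u<..<v} \<inter> E)) = measure lebesgue {u<..<v} - measure lebesgue ({u<..<v} \<inter> E)"
    by (rule measure_Diff) (use Slm Elm in \<open>auto simp: fmeasurable_def\<close>)
  have d2: "measure lebesgue ({a..b} - ({a..b} \<inter> E)) = measure lebesgue {a..b} - measure lebesgue ({a..b} \<inter> E)"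
    by (rule measure_Diff) (use Ilm Elm in \<open>auto simp: fmeasurable_def\<close>)
  have m: "measure lebesgue ({u<..<v} - E) \<le> measure lebesgue ({a..b} - E)"
    by (rule measure_mono_fmeasurable) (use uv Slm Ilm Elm in \<open>auto intro: fmeasurable_Diff fmeasurableD\<close>)
  have "{u<..<v} - ({u<..<v} \<inter> E) = {u<..<v} - E" "{a..b} - ({a..b} \<inter> E) = {a..b} - E" by auto
  moreover have "measure lebesgue {u<..<v} = v - u" using uv by (simp add: meas_Ioo)
  moreover have "measure lebesgue {a..b} = b - a" using uv by (simp add: meas_Icc)
  moreover have "{a..b} \<inter> E = E \<inter> {a..b}" by auto
  ultimately show ?thesis using d1 d2 m FL[OF ab] unfolding E_def by (simp add: algebra_simps)
qed

lemma exists_level: assumes "0 < r" "r \<le> cl \<alpha> n / 2"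
  shows "\<exists>k\<ge>n. 2 * r \<le> cl \<alpha> k \<and> cl \<alpha> (Suc k) < 2 * r"
proof (rule ccontr)
  assume H: "\<not> ?thesis"
  have all: "\<forall>j. 2 * r \<le> cl \<alpha> (n + j)"
  proof
    fix j show "2 * r \<le> cl \<alpha> (n + j)"
      by (induction j) (use assms H in \<open>auto simp: not_less\<close>)
  qed
  have "\<forall>\<^sub>F j in sequentially. cl \<alpha> j < 2 * r" using order_tendstoD(2)[OF cl_lim] assms by simp
  then obtain N where "\<forall>j\<ge>N. cl \<alpha> j < 2 * r" by (auto simp: eventually_sequentially)
  then have "cl \<alpha> (n + N) < 2 * r" by simp
  then show False using all by (metis not_less)
qed

lemma dens: assumes x: "x \<in> cantor_set \<alpha>" and Tn: "T n \<le> 1/16" and r: "0 < r" "r \<le> cl \<alpha> n / 2"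
  shows "max (measure lebesgue ({x - r<..<x} \<inter> cantor_set \<alpha>) / r)
             (measure lebesgue ({x<..<x + r} \<inter> cantor_set \<alpha>) / r) \<ge> 1 - 8 * T n"
proof -
  obtain k where k: "n \<le> k" "2 * r \<le> cl \<alpha> k" "cl \<alpha> (Suc k) < 2 * r" using exists_level[OF r] by blast
  have Tk: "T k \<le> T n" using T_dec k(1) by (simp add: decseq_def)
  have ak: "\<alpha> (Suc k) \<le> 1/16" using T_Suc[of k] T_nonneg[of "Suc k"] Tk Tn by linarith
  have "cl \<alpha> (Suc k) = (1 - \<alpha> (Suc k)) * cl \<alpha> k / 2" by (rule cl_Suc)
  moreover have "cl \<alpha> k / 2 \<le> (1 - \<alpha> (Suc k)) * cl \<alpha> k"
  proof -
    have "1/2 \<le> 1 - \<alpha> (Suc k)" using ak by simp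
    from mult_right_mono[OF this less_imp_le[OF cl_pos[of k]]] show ?thesis by simp
  qed
  ultimately have clk: "cl \<alpha> k < 8 * r" using k(3) by linarith
  have Tknn: "0 \<le> T k" by (rule T_nonneg)
  have key: "(1 - 8 * T n) * r \<le> r - T k * cl \<alpha> k"
  proof -
    have "T k * cl \<alpha> k \<le> T k * (8 * r)" using mult_left_mono[OF less_imp_le[OF clk] Tknn] .
    moreover have "T k * (8 * r) \<le> T n * (8 * r)" using mult_right_mono[OF Tk] r by simp
    ultimately show ?thesis by (simp add: algebra_simps)
  qed
  have "x \<in> cantor_level \<alpha> k" using x E_sub_level by blast
  then obtain a b where ab: "(a,b) \<in> cantor_intervals \<alpha> k" "a \<le> x" "x \<le> b" using level_iff by blast
  have ba: "b - a = cl \<alpha> k" using ci_geom[OF ab(1)] by blast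
  show ?thesis
  proof (cases "x + r \<le> b")
    case True
    have "measure lebesgue ({x<..<x + r} \<inter> cantor_set \<alpha>) \<ge> (x + r - x) - T k * (b - a)"
      by (rule KL[OF ab(1)]) (use True ab r in auto)
    then have "(1 - 8 * T n) * r \<le> measure lebesgue ({x<..<x + r} \<inter> cantor_set \<alpha>)" using key ba by simp
    then have "1 - 8 * T n \<le> measure lebesgue ({x<..<x + r} \<inter> cantor_set \<alpha>) / r"
      using r by (simp add: pos_le_divide_eq)
    then show ?thesis by linarith
  next
    case False
    then have "a \<le> x - r" using k(2) ba by linarith
    have "measure lebesgue ({x - r<..<x} \<inter> cantor_set \<alpha>) \<ge> (x - (x - r)) - T k * (b - a)"
      by (rule KL[OF ab(1)]) (use \<open>a \<le> x - r\<close> ab r in auto)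
    then have "(1 - 8 * T n) * r \<le> measure lebesgue ({x - r<..<x} \<inter> cantor_set \<alpha>)" using key ba by simp
    then have "1 - 8 * T n \<le> measure lebesgue ({x - r<..<x} \<inter> cantor_set \<alpha>) / r"
      using r by (simp add: pos_le_divide_eq)
    then show ?thesis by linarith
  qed
qed

lemma SUDT_E: "SUDT (cantor_set \<alpha>)"
proof -
  define \<gamma> where "\<gamma> n = max (1/2) (1 - 8 * T n)" for n
  define \<delta> where "\<delta> n = cl \<alpha> n / 2" for n
  have inc: "incseq \<gamma>" unfolding incseq_def \<gamma>_def proof (intro allI impI)
    fix m n :: nat assume "m \<le> n"
    then have "T n \<le> T m" using T_dec by (simp add: decseq_def)
    then show "max (1/2) (1 - 8 * T m) \<le> max (1/2) (1 - 8 * T n)" by (simp add: max_def)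
  qed
  have "(\<lambda>n. 1 - 8 * T n) \<longlonglongrightarrow> 1 - 8 * 0" by (intro tendsto_intros T_lim)
  then have "\<gamma> \<longlonglongrightarrow> max (1/2) (1 - 8 * 0)" unfolding \<gamma>_def by (intro tendsto_max tendsto_const)
  then have g1: "\<gamma> \<longlonglongrightarrow> 1" by simp
  have dd: "decseq \<delta>" using cl_dec unfolding \<delta>_def decseq_def by (simp add: divide_right_mono)
  have "\<delta> \<longlonglongrightarrow> 0 / 2" unfolding \<delta>_def by (intro tendsto_divide cl_lim tendsto_const) simp
  then have d0: "\<delta> \<longlonglongrightarrow> 0" by simp
  have pos: "\<forall>n. \<gamma> n > 0 \<and> \<delta> n > 0" unfolding \<gamma>_def \<delta>_def using cl_pos by auto
  have "\<forall>\<^sub>F n in sequentially. T n < 1/16" by (rule order_tendstoD(2)[OF T_lim]) simp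
  then obtain K where K: "\<forall>n\<ge>K. T n < 1/16" by (auto simp: eventually_sequentially)
  have sub: "cantor_set \<alpha> \<subseteq> (\<Inter>n \<in> {K..}. density_set (cantor_set \<alpha>) (\<gamma> n) (\<delta> n))"
  proof (intro subsetI INT_I)
    fix x n assume x: "x \<in> cantor_set \<alpha>" and n: "n \<in> {K..}"
    then have Tn: "T n \<le> 1/16" using K by auto
    then have g: "\<gamma> n = 1 - 8 * T n" unfolding \<gamma>_def by simp
    show "x \<in> density_set (cantor_set \<alpha>) (\<gamma> n) (\<delta> n)"
      unfolding density_set_def g \<delta>_def using dens[OF x Tn] by auto
  qed
  show ?thesis unfolding SUDT_def
    by (rule exI[of _ \<gamma>], rule exI[of _ \<delta>]) (use inc g1 dd d0 pos sub in blast)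
qed
end
theorem theorem3p2:
  fixes \<alpha> :: "nat \<Rightarrow> real"
  assumes "\<And>n. n \<ge> 1 \<Longrightarrow> 0 < \<alpha> n \<and> \<alpha> n < 1"
    and "summable (\<lambda>n. \<alpha> (Suc n))"
  shows "closed (cantor_set \<alpha>) \<and> interior (closure (cantor_set \<alpha>)) = {} \<and> SUDT (cantor_set \<alpha>)"
proof -
  interpret cset2 \<alpha> by unfold_locales (use assms in auto)
  show ?thesis using E_closed interior_E SUDT_E by blast
qed

end
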